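(* Let $q$ be a prime power and let $n\ge 1$, $k\ge1$ and $0\le x\le k$ be integers. Let $\mathbf{M}$ be a random $n\times k$ matrix over $\mathbb{F}_q$ whose entries are independent and uniformly distributed on $\mathbb{F}_q$ (the coding vectors of $n$ received non-systematic random linear combinations of $k$ source packets), and let $X=\{i\in\{1,\dots,k\}:\mathbf{e}_i\in\mathrm{Row}(\mathbf{M})\}$ (the set of recoverable source packets). Then $$P_{\mathrm{ns}}(|X|\ge x\mid N=n)=\frac{1}{q^{nk}}\sum_{r=x}^{\min(n,k)}\left(\sum_{i=x}^{r}\binom{k}{i}\sum_{j=0}^{k-i}(-1)^j\binom{k-i}{j}\binom{k-i-j}{r-i-j}_q\right)\prod_{\ell=0}^{r-1}(q^n-q^\ell),$$ where an empty sum equals $0$ and an empty product equals $1$.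
   Context: $\mathbf{e}_i$ denotes the $i$-th standard unit vector of $\mathbb{F}_q^k$, and $\mathrm{Row}(\mathbf{M})$ is the row space of $\mathbf{M}$. $N$ denotes the number of rows of $\mathbf{M}$. $\binom{m}{d}$ is the ordinary binomial coefficient. $\binom{m}{d}_q$ is the Gaussian binomial coefficient, i.e. the number of $d$-dimensional subspaces of an $m$-dimensional vector space over $\mathbb{F}_q$, $\binom{m}{d}_q=\prod_{i=0}^{d-1}\frac{q^{m}-q^{i}}{q^{d}-q^{i}}$ for $0\le d\le m$. By convention $\binom{m}{d}_q=0$ if $d<0$ or $d>m$. *)

theory Defs
  imports "HOL-Probability.Probability"
begin

definition matrices :: "nat \<Rightarrow> nat \<Rightarrow> (nat \<Rightarrow> nat \<Rightarrow> 'a::zero) set" where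
  "matrices n k = {M. \<forall>i j. (n \<le> i \<or> k \<le> j) \<longrightarrow> M i j = 0}"

definition row_space :: "nat \<Rightarrow> nat \<Rightarrow> (nat \<Rightarrow> nat \<Rightarrow> 'a::field) \<Rightarrow> (nat \<Rightarrow> 'a) set" where
  "row_space n k M = {v. \<exists>c :: nat \<Rightarrow> 'a. v = (\<lambda>j. \<Sum>i<n. c i * M i j)}"

definition unit_vec :: "nat \<Rightarrow> nat \<Rightarrow> 'a::zero_neq_one" where
  "unit_vec i = (\<lambda>j. if j = i then 1 else 0)"

text \<open>Set of recoverable source packets (0-indexed columns).\<close>
definition recoverable :: "nat \<Rightarrow> nat \<Rightarrow> (nat \<Rightarrow> nat \<Rightarrow> 'a::field) \<Rightarrow> nat set" where
  "recoverable n k M = {i. i < k \<and> unit_vec i \<in> row_space n k M}"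

definition gauss_binom :: "real \<Rightarrow> int \<Rightarrow> int \<Rightarrow> real" where
  "gauss_binom q m d = (if 0 \<le> d \<and> d \<le> m then
     (\<Prod>i<nat d. (q ^ nat m - q ^ i) / (q ^ nat d - q ^ i)) else 0)"

end

theory Submission
  imports Defs "HOL-Library.Function_Algebras"
begin


interpretation fv: vector_space "(\<lambda>a (f::nat\<Rightarrow>'a::field) i. a * f i)"
  by unfold_locales (auto simp: algebra_simps fun_eq_iff)

interpretation fs: vector_space "(times :: 'a::field \<Rightarrow> 'a \<Rightarrow> 'a)"
  by unfold_locales (auto simp: algebra_simps)

definition vecs :: "nat \<Rightarrow> (nat \<Rightarrow> 'a::zero) set" where
  "vecs n = {v. \<forall>i\<ge>n. v i = 0}"

lemma subspace_vecs: "fv.subspace (vecs n :: (nat \<Rightarrow> 'a::field) set)"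
  unfolding fv.subspace_def vecs_def by (auto simp: zero_fun_def)

lemma bij_vecs: "bij_betw (\<lambda>v. restrict v {..<n}) (vecs n :: (nat \<Rightarrow> 'a::zero) set) (PiE {..<n} (\<lambda>_. UNIV))"
proof (rule bij_betw_byWitness[where f'="\<lambda>f i. if i < n then f i else 0"])
  show "\<forall>a\<in>(vecs n :: (nat \<Rightarrow> 'a) set). (\<lambda>i. if i < n then restrict a {..<n} i else 0) = a"
  proof
    fix a :: "nat \<Rightarrow> 'a" assume "a \<in> vecs n"
    then show "(\<lambda>i. if i < n then restrict a {..<n} i else 0) = a"
      by (intro ext) (simp add: vecs_def)
  qed
  show "\<forall>a'\<in>{..<n} \<rightarrow>\<^sub>E (UNIV :: 'a set). restrict (\<lambda>i. if i < n then a' i else 0) {..<n} = a'"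
  proof
    fix a' :: "nat \<Rightarrow> 'a" assume a': "a' \<in> {..<n} \<rightarrow>\<^sub>E UNIV"
    show "restrict (\<lambda>i. if i < n then a' i else 0) {..<n} = a'"
    proof (rule ext)
      fix i show "restrict (\<lambda>i. if i < n then a' i else 0) {..<n} i = a' i"
        using PiE_arb[OF a', of i] by (cases "i < n") auto
    qed
  qed
  show "(\<lambda>v. restrict v {..<n}) ` (vecs n :: (nat \<Rightarrow> 'a) set) \<subseteq> {..<n} \<rightarrow>\<^sub>E UNIV" by (simp add: image_subset_iff)
  show "(\<lambda>f i. if i < n then f i else 0) ` ({..<n} \<rightarrow>\<^sub>E UNIV) \<subseteq> (vecs n :: (nat \<Rightarrow> 'a) set)"
    by (simp add: vecs_def image_subset_iff)
qed

lemma card_vecs: "card (vecs n :: (nat \<Rightarrow> 'a::{finite,zero}) set) = CARD('a) ^ n"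
proof -
  have "card (vecs n :: (nat \<Rightarrow> 'a) set) = card ({..<n} \<rightarrow>\<^sub>E (UNIV :: 'a set))"
    by (rule bij_betw_same_card[OF bij_vecs])
  also have "\<dots> = CARD('a) ^ n" by (simp add: card_PiE)
  finally show ?thesis .
qed

lemma finite_vecs: "finite (vecs n :: (nat \<Rightarrow> 'a::{finite,zero}) set)"
proof -
  have "finite ({..<n} \<rightarrow>\<^sub>E (UNIV :: 'a set))" by (intro finite_PiE) auto
  moreover have "finite (vecs n :: (nat \<Rightarrow> 'a) set) = finite ({..<n} \<rightarrow>\<^sub>E (UNIV :: 'a set))"
    by (rule bij_betw_finite[OF bij_vecs])
  ultimately show ?thesis by simp
qed

lemma span_vecs:
  assumes "S \<subseteq> (vecs n :: (nat \<Rightarrow> 'a::field) set)"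
  shows "fv.span S \<subseteq> vecs n"
  using fv.span_minimal[OF assms subspace_vecs] .

lemma card_span_insert_notin:
  fixes S :: "(nat \<Rightarrow> 'a::{finite,field}) set"
  assumes "v \<notin> fv.span S"
  shows "card (fv.span (insert v S)) = CARD('a) * card (fv.span S)"
proof -
  let ?g = "\<lambda>(a::'a, u::nat\<Rightarrow>'a). u + (\<lambda>i. a * v i)"
  have img: "fv.span (insert v S) = ?g ` (UNIV \<times> fv.span S)"
  proof (rule set_eqI)
    fix x
    show "x \<in> fv.span (insert v S) \<longleftrightarrow> x \<in> ?g ` (UNIV \<times> fv.span S)"
      unfolding fv.span_breakdown_eq
    proof
      assume "\<exists>k. x - (\<lambda>i. k * v i) \<in> fv.span S"
      then obtain k where "x - (\<lambda>i. k * v i) \<in> fv.span S" by blast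
      then show "x \<in> ?g ` (UNIV \<times> fv.span S)"
        by (intro image_eqI[where x="(k, x - (\<lambda>i. k * v i))"]) auto
    next
      assume "x \<in> ?g ` (UNIV \<times> fv.span S)"
      then obtain a u where "u \<in> fv.span S" "x = u + (\<lambda>i. a * v i)" by auto
      then show "\<exists>k. x - (\<lambda>i. k * v i) \<in> fv.span S" by (intro exI[of _ a]) auto
    qed
  qed
  have inj: "inj_on ?g (UNIV \<times> fv.span S)"
  proof (rule inj_onI, clarify)
    fix a1 u1 a2 u2
    assume u: "u1 \<in> fv.span S" "u2 \<in> fv.span S" and eq: "u1 + (\<lambda>i. a1 * v i) = u2 + (\<lambda>i. a2 * v i)"
    have "a1 = a2"
    proof (rule ccontr)
      assume ne: "a1 \<noteq> a2"
      have "(\<lambda>i. (a1 - a2) * v i) = u2 - u1"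
        using eq by (auto simp: fun_eq_iff algebra_simps dest: fun_cong)
      hence "(\<lambda>i. (a1 - a2) * v i) \<in> fv.span S" using u by (simp add: fv.span_diff)
      hence "(\<lambda>i. inverse (a1 - a2) * ((a1 - a2) * v i)) \<in> fv.span S"
        by (rule fv.span_scale)
      hence "v \<in> fv.span S" using ne by simp
      thus False using assms by simp
    qed
    thus "a1 = a2 \<and> u1 = u2" using eq by simp
  qed
  have "card ((UNIV::'a set) \<times> fv.span S) = CARD('a) * card (fv.span S)"
    by (simp add: card_cartesian_product)
  then show ?thesis
    using img card_image[OF inj] by argo
qed

lemma card_span_insert:
  fixes S :: "(nat \<Rightarrow> 'a::{finite,field}) set"
  shows "card (fv.span (insert v S)) = (if v \<in> fv.span S then card (fv.span S) else CARD('a) * card (fv.span S))"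
proof (cases "v \<in> fv.span S")
  case True
  then have "fv.span (insert v S) = fv.span S" by (rule fv.span_redundant)
  then show ?thesis using True by simp
next
  case False
  then show ?thesis using card_span_insert_notin[of v S] by simp
qed



lemma card_field_ge2: "2 \<le> CARD('a::{finite,field})"
proof -
  have "card {0::'a, 1} \<le> CARD('a)" by (rule card_mono) simp_all
  thus ?thesis by simp
qed

lemma span_card_pow:
  fixes S :: "(nat \<Rightarrow> 'a::{finite,field}) set"
  assumes "finite S"
  shows "\<exists>r\<le>card S. card (fv.span S) = CARD('a) ^ r"
  using assms
proof (induction S rule: finite_induct)
  case empty
  then show ?case by (simp add: fv.span_empty)
next
  case (insert v S)
  then obtain r where r: "r \<le> card S" "card (fv.span S) = CARD('a)^r" by blast
  show ?case
  proof (cases "v \<in> fv.span S")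
    case True
    thus ?thesis using r insert by (intro exI[of _ r]) (simp add: card_span_insert)
  next
    case False
    thus ?thesis using r insert by (intro exI[of _ "Suc r"]) (simp add: card_span_insert)
  qed
qed

lemma span_card_pos:
  fixes S :: "(nat \<Rightarrow> 'a::{finite,field}) set"
  assumes "finite S"
  shows "1 \<le> card (fv.span S)"
proof -
  obtain r where "card (fv.span S) = CARD('a) ^ r" using span_card_pow[OF assms] by blast
  moreover have "1 \<le> CARD('a) ^ r" using card_field_ge2[where 'a='a] by simp
  ultimately show ?thesis by simp
qed

lemma span_card_le_insert:
  fixes S :: "(nat \<Rightarrow> 'a::{finite,field}) set"
  shows "card (fv.span (insert v S)) \<le> CARD('a) * card (fv.span S)"
  using card_field_ge2[where 'a='a] by (simp add: card_span_insert)

lemma span_card_le_img: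
  fixes C :: "nat \<Rightarrow> nat \<Rightarrow> 'a::{finite,field}"
  assumes "finite T"
  shows "card (fv.span (C ` (B \<union> T))) \<le> CARD('a) ^ card T * card (fv.span (C ` B))"
  using assms
proof (induction T rule: finite_induct)
  case empty show ?case by simp
next
  case (insert a T)
  have "C ` (B \<union> insert a T) = insert (C a) (C ` (B \<union> T))" by auto
  hence "card (fv.span (C ` (B \<union> insert a T))) \<le> CARD('a) * card (fv.span (C ` (B \<union> T)))"
    using span_card_le_insert by metis
  also have "\<dots> \<le> CARD('a) * (CARD('a) ^ card T * card (fv.span (C ` B)))"
    using insert.IH by simp
  finally show ?case using insert by (simp add: mult.assoc)
qed

lemma indep_iff_card:
  fixes C :: "nat \<Rightarrow> nat \<Rightarrow> 'a::{finite,field}"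
  assumes "finite T" "finite B" "B \<inter> T = {}"
  shows "(\<forall>i\<in>T. C i \<notin> fv.span (C ` ((B \<union> T) - {i}))) \<longleftrightarrow>
         card (fv.span (C ` (B \<union> T))) = CARD('a) ^ card T * card (fv.span (C ` B))"
  using assms(1,3)
proof (induction T rule: finite_induct)
  case empty
  then show ?case by simp
next
  case (insert a T)
  let ?q = "CARD('a)"
  let ?S = "C ` (B \<union> T)"
  let ?X = "fv.span ?S"
  let ?cB = "card (fv.span (C ` B))"
  have aB: "a \<notin> B" using insert.prems by auto
  have BT: "B \<inter> T = {}" using insert.prems by auto
  have eqS: "C ` (B \<union> insert a T) = insert (C a) ?S" by auto
  have rem_a: "(B \<union> insert a T) - {a} = B \<union> T" using aB insert.hyps by auto
  have cs: "card (fv.span (C ` (B \<union> insert a T))) = (if C a \<in> ?X then card ?X else ?q * card ?X)"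
    unfolding eqS by (rule card_span_insert)
  have cBpos: "1 \<le> ?cB" using span_card_pos assms(2) by blast
  have leX: "card ?X \<le> ?q ^ card T * ?cB" by (rule span_card_le_img[OF insert.hyps(1)])
  have cT: "card (insert a T) = Suc (card T)" using insert.hyps by simp
  have q2: "2 \<le> ?q" by (rule card_field_ge2)
  show ?case
  proof
    assume H: "\<forall>i\<in>insert a T. C i \<notin> fv.span (C ` ((B \<union> insert a T) - {i}))"
    have "\<forall>i\<in>T. C i \<notin> fv.span (C ` ((B \<union> T) - {i}))"
    proof
      fix i assume i: "i \<in> T"
      have "fv.span (C ` ((B \<union> T) - {i})) \<subseteq> fv.span (C ` ((B \<union> insert a T) - {i}))"
        by (intro fv.span_mono image_mono) auto
      thus "C i \<notin> fv.span (C ` ((B \<union> T) - {i}))" using H i by auto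
    qed
    hence X: "card ?X = ?q ^ card T * ?cB" using insert.IH BT by blast
    have "C a \<notin> ?X" using H rem_a by auto
    thus "card (fv.span (C ` (B \<union> insert a T))) = ?q ^ card (insert a T) * ?cB"
      using cs X cT by simp
  next
    assume H: "card (fv.span (C ` (B \<union> insert a T))) = ?q ^ card (insert a T) * ?cB"
    have notin: "C a \<notin> ?X"
    proof
      assume "C a \<in> ?X"
      hence "?q ^ Suc (card T) * ?cB \<le> ?q ^ card T * ?cB" using cs H leX cT by simp
      moreover have "?q ^ card T * ?cB < ?q ^ Suc (card T) * ?cB"
        using q2 cBpos by simp
      ultimately show False by simp
    qed
    hence "?q * card ?X = ?q * (?q ^ card T * ?cB)" using cs H cT by simp
    hence X: "card ?X = ?q ^ card T * ?cB" using q2 by simp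
    hence IH: "\<forall>i\<in>T. C i \<notin> fv.span (C ` ((B \<union> T) - {i}))" using insert.IH BT by blast
    show "\<forall>i\<in>insert a T. C i \<notin> fv.span (C ` ((B \<union> insert a T) - {i}))"
    proof
      fix i assume i: "i \<in> insert a T"
      show "C i \<notin> fv.span (C ` ((B \<union> insert a T) - {i}))"
      proof (cases "i = a")
        case True
        thus ?thesis using notin rem_a by simp
      next
        case False
        hence iT: "i \<in> T" using i by simp
        let ?Y = "C ` ((B \<union> T) - {i})"
        have e1: "C ` ((B \<union> insert a T) - {i}) = insert (C a) ?Y" using False by auto
        have e2: "insert (C i) ?Y = ?S" using iT by auto
        show ?thesis
        proof
          assume "C i \<in> fv.span (C ` ((B \<union> insert a T) - {i}))"
          hence "C i \<in> fv.span (insert (C a) ?Y)" using e1 by simp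
          moreover have "C i \<notin> fv.span ?Y" using IH iT by blast
          ultimately have "C a \<in> fv.span (insert (C i) ?Y)" by (rule fv.in_span_insert)
          thus False using notin e2 by simp
        qed
      qed
    qed
  qed
qed



lemma card_filter_PiE_insert:
  assumes "j \<notin> J" "finite J" "finite V"
  shows "card {C \<in> PiE (insert j J) (\<lambda>_. V). P C} = (\<Sum>g\<in>PiE J (\<lambda>_. V). card {y\<in>V. P (g(j:=y))})"
proof -
  let ?\<phi> = "\<lambda>(y, g). g(j := y)"
  let ?A = "{p \<in> V \<times> PiE J (\<lambda>_. V). P (?\<phi> p)}"
  have e1: "{C \<in> PiE (insert j J) (\<lambda>_. V). P C} = ?\<phi> ` ?A"
    unfolding PiE_insert_eq by blast
  have inj: "inj_on ?\<phi> ?A"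
    by (rule inj_on_subset[OF inj_combinator[OF assms(1), of "\<lambda>_. V"]]) blast
  have e2: "?A = (\<lambda>(g,y). (y,g)) ` (SIGMA g:PiE J (\<lambda>_. V). {y\<in>V. P (g(j:=y))})"
  proof (rule set_eqI)
    fix p :: "'b \<times> ('a \<Rightarrow> 'b)"
    obtain y g where p: "p = (y, g)" by (cases p)
    show "p \<in> ?A \<longleftrightarrow> p \<in> (\<lambda>(g,y). (y,g)) ` (SIGMA g:PiE J (\<lambda>_. V). {y\<in>V. P (g(j:=y))})"
      unfolding p by (simp add: image_iff)
  qed
  have inj2: "inj_on (\<lambda>(g,y). (y,g)) (SIGMA g:PiE J (\<lambda>_. V). {y\<in>V. P (g(j:=y))})"
    by (rule inj_onI) clarsimp
  have fin: "finite (PiE J (\<lambda>_. V))" by (rule finite_PiE) (use assms in auto)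
  have "card {C \<in> PiE (insert j J) (\<lambda>_. V). P C} = card ?A"
    unfolding e1 by (rule card_image[OF inj])
  also have "\<dots> = card (SIGMA g:PiE J (\<lambda>_. V). {y\<in>V. P (g(j:=y))})"
    unfolding e2 by (rule card_image[OF inj2])
  also have "\<dots> = (\<Sum>g\<in>PiE J (\<lambda>_. V). card {y\<in>V. P (g(j:=y))})"
    by (rule card_SigmaI) (use fin assms(3) in auto)
  finally show ?thesis .
qed

lemma card_y:
  fixes S :: "(nat \<Rightarrow> 'a::{finite,field}) set"
  assumes "S \<subseteq> vecs n" "finite S"
  shows "card {y \<in> vecs n. card (fv.span (insert y S)) = CARD('a) ^ b} =
         (if card (fv.span S) = CARD('a) ^ b then CARD('a) ^ b else 0) +
         (if b \<noteq> 0 \<and> card (fv.span S) = CARD('a) ^ (b - 1) then CARD('a) ^ n - CARD('a) ^ (b - 1) else 0)"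
proof -
  let ?q = "CARD('a)"
  have q1: "1 < ?q" using card_field_ge2[where 'a='a] by simp
  obtain c where c: "card (fv.span S) = ?q ^ c" using span_card_pow[OF assms(2)] by blast
  have sub: "fv.span S \<subseteq> vecs n" by (rule span_vecs[OF assms(1)])
  have key: "card (fv.span (insert y S)) = ?q ^ b \<longleftrightarrow> (y \<in> fv.span S \<and> c = b) \<or> (y \<notin> fv.span S \<and> Suc c = b)" for y
    using c power_inject_exp[OF q1, of c b] power_inject_exp[OF q1, of "Suc c" b]
    by (auto simp: card_span_insert)
  have set: "{y \<in> vecs n. card (fv.span (insert y S)) = ?q ^ b} =
     (if c = b then fv.span S else {}) \<union> (if Suc c = b then vecs n - fv.span S else {})"
    using key sub by auto
  have fs: "finite (fv.span S)" using finite_subset[OF sub finite_vecs] .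
  have cd: "card (vecs n - fv.span S) = ?q ^ n - ?q ^ c"
    using card_Diff_subset[OF fs sub] card_vecs[where 'a='a] c by simp
  have "card {y \<in> vecs n. card (fv.span (insert y S)) = ?q ^ b} =
     (if c = b then ?q ^ c else 0) + (if Suc c = b then ?q ^ n - ?q ^ c else 0)"
    unfolding set using c cd by (auto simp: card_Un_disjoint fs finite_vecs)
  also have "\<dots> = (if card (fv.span S) = ?q ^ b then ?q ^ b else 0) +
         (if b \<noteq> 0 \<and> card (fv.span S) = ?q ^ (b - 1) then ?q ^ n - ?q ^ (b - 1) else 0)"
    using c power_inject_exp[OF q1, of c b] power_inject_exp[OF q1, of c "b - 1"]
    by (cases b) auto
  finally show ?thesis .
qed

definition cnt :: "'a::{finite,field} itself \<Rightarrow> nat \<Rightarrow> nat set \<Rightarrow> nat \<Rightarrow> nat" where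
  "cnt _ n J b = card {C \<in> PiE J (\<lambda>_. vecs n :: (nat \<Rightarrow> 'a) set). card (fv.span (C ` J)) = CARD('a) ^ b}"

lemma sum_if_const: "finite A \<Longrightarrow> (\<Sum>x\<in>A. if P x then c else 0) = c * card {x\<in>A. P x}"
  by (simp add: sum.inter_filter[symmetric])

lemma cnt_insert:
  assumes "j \<notin> J" "finite J"
  shows "cnt TYPE('a::{finite,field}) n (insert j J) b =
     CARD('a) ^ b * cnt TYPE('a) n J b +
     (if b \<noteq> 0 then (CARD('a) ^ n - CARD('a) ^ (b - 1)) * cnt TYPE('a) n J (b - 1) else 0)"
proof -
  let ?q = "CARD('a)"
  let ?V = "vecs n :: (nat \<Rightarrow> 'a) set"
  have img: "(g(j := y)) ` insert j J = insert y (g ` J)" for g :: "nat \<Rightarrow> nat \<Rightarrow> 'a" and y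
    using assms(1) by auto
  have sub: "g ` J \<subseteq> ?V" if "g \<in> PiE J (\<lambda>_. ?V)" for g
    using that by (auto simp: PiE_mem)
  have "cnt TYPE('a) n (insert j J) b = (\<Sum>g\<in>PiE J (\<lambda>_. ?V). card {y\<in>?V. card (fv.span ((g(j:=y)) ` insert j J)) = ?q ^ b})"
    unfolding cnt_def by (rule card_filter_PiE_insert[OF assms(1,2) finite_vecs])
  also have "\<dots> = (\<Sum>g\<in>PiE J (\<lambda>_. ?V).
        (if card (fv.span (g ` J)) = ?q ^ b then ?q ^ b else 0) +
        (if b \<noteq> 0 \<and> card (fv.span (g ` J)) = ?q ^ (b - 1) then ?q ^ n - ?q ^ (b - 1) else 0))"
    unfolding img
    by (rule sum.cong[OF refl], rule card_y[OF sub]) (use assms(2) in auto)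
  also have "\<dots> = ?q ^ b * cnt TYPE('a) n J b +
     (if b \<noteq> 0 then (?q ^ n - ?q ^ (b - 1)) * cnt TYPE('a) n J (b - 1) else 0)"
    unfolding sum.distrib cnt_def
    using assms(2) by (cases "b = 0") (simp_all add: sum_if_const finite_PiE finite_vecs)
  finally show ?thesis .
qed



lemma cnt_empty: "cnt TYPE('a::{finite,field}) n {} b = (if b = 0 then 1 else 0)"
proof -
  have q1: "1 < CARD('a)" using card_field_ge2[where 'a='a] by simp
  have e: "Suc 0 = CARD('a) ^ b \<longleftrightarrow> b = 0" using one_less_power[OF q1, of b] by (cases b) auto
  have "{C \<in> PiE {} (\<lambda>_. vecs n :: (nat \<Rightarrow> 'a) set). card (fv.span (C ` {})) = CARD('a) ^ b}
       = (if b = 0 then {\<lambda>_. undefined} else {})"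
    using e by (auto simp: fv.span_empty)
  thus ?thesis unfolding cnt_def using e by simp
qed

lemma cnt_le_vecs:
  assumes "cnt TYPE('a::{finite,field}) n J c \<noteq> 0"
  shows "CARD('a) ^ c \<le> CARD('a) ^ n"
proof -
  obtain g where g: "g \<in> PiE J (\<lambda>_. vecs n :: (nat \<Rightarrow> 'a) set)" "card (fv.span (g ` J)) = CARD('a) ^ c"
  proof -
    have "{C \<in> PiE J (\<lambda>_. vecs n :: (nat \<Rightarrow> 'a) set). card (fv.span (C ` J)) = CARD('a) ^ c} \<noteq> {}"
      using assms unfolding cnt_def by (intro notI) simp
    thus ?thesis using that by blast
  qed
  have "g ` J \<subseteq> vecs n" using g(1) by (auto simp: PiE_mem)
  hence "fv.span (g ` J) \<subseteq> vecs n" by (rule span_vecs)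
  hence "card (fv.span (g ` J)) \<le> card (vecs n :: (nat \<Rightarrow> 'a) set)" by (rule card_mono[OF finite_vecs])
  thus ?thesis using g(2) card_vecs[where 'a='a] by simp
qed

lemma cnt_insert_real:
  assumes "j \<notin> J" "finite J"
  shows "real (cnt TYPE('a::{finite,field}) n (insert j J) (Suc c)) =
     real CARD('a) ^ Suc c * real (cnt TYPE('a) n J (Suc c)) +
     (real CARD('a) ^ n - real CARD('a) ^ c) * real (cnt TYPE('a) n J c)"
proof (cases "cnt TYPE('a) n J c = 0")
  case True
  then show ?thesis using cnt_insert[OF assms, where 'a='a and n=n and b="Suc c"] by simp
next
  case False
  hence le: "CARD('a) ^ c \<le> CARD('a) ^ n" by (rule cnt_le_vecs)
  show ?thesis using cnt_insert[OF assms, where 'a='a and n=n and b="Suc c"] le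
    by (simp add: of_nat_diff)
qed

definition FF :: "real \<Rightarrow> nat \<Rightarrow> nat \<Rightarrow> real" where
  "FF q m b = (\<Prod>i<b. q ^ m - q ^ i)"

lemma FF_0 [simp]: "FF q m 0 = 1" by (simp add: FF_def)
lemma FF_Suc: "FF q m (Suc b) = FF q m b * (q ^ m - q ^ b)" by (simp add: FF_def)
lemma FF_zero_m: "FF q 0 (Suc b) = 0"
  unfolding FF_def by (rule prod_zero) (auto intro!: bexI[where x=0])
lemma FF_SucSuc: "FF q (Suc m) (Suc b) = (q ^ Suc m - 1) * q ^ b * FF q m b"
proof (induction b)
  case 0 then show ?case by (simp add: FF_def)
next
  case (Suc b)
  have "FF q (Suc m) (Suc (Suc b)) = FF q (Suc m) (Suc b) * (q ^ Suc m - q ^ Suc b)" by (rule FF_Suc)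
  also have "\<dots> = (q ^ Suc m - 1) * q ^ b * FF q m b * (q * (q ^ m - q ^ b))"
    unfolding Suc.IH by (simp add: algebra_simps)
  also have "\<dots> = (q ^ Suc m - 1) * q ^ Suc b * FF q m (Suc b)"
    unfolding FF_Suc[of q m b] by (simp add: algebra_simps)
  finally show ?case .
qed

lemma FF_pascal:
  "FF q (Suc m) (Suc c) = q ^ Suc c * FF q m (Suc c) + q ^ c * (q ^ Suc c - 1) * FF q m c"
  unfolding FF_SucSuc unfolding FF_Suc[of q m c] by (simp add: algebra_simps)

lemma cnt_closed:
  assumes "finite J"
  shows "real (cnt TYPE('a::{finite,field}) n J b) * FF (real CARD('a)) b b =
         FF (real CARD('a)) (card J) b * FF (real CARD('a)) n b"
  using assms
proof (induction J arbitrary: b rule: finite_induct)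
  case empty
  then show ?case by (cases b) (simp_all add: cnt_empty FF_zero_m)
next
  case (insert j J)
  let ?q = "real CARD('a)"
  show ?case
  proof (cases b)
    case 0
    then show ?thesis using cnt_insert[OF insert.hyps(2,1), where 'a='a and n=n and b=0] insert.IH[of 0] by simp
  next
    case (Suc c)
    have "real (cnt TYPE('a) n (insert j J) (Suc c)) * FF ?q (Suc c) (Suc c)
      = ?q ^ Suc c * (real (cnt TYPE('a) n J (Suc c)) * FF ?q (Suc c) (Suc c)) +
        (?q ^ n - ?q ^ c) * ?q ^ c * (?q ^ Suc c - 1) * (real (cnt TYPE('a) n J c) * FF ?q c c)"
      unfolding cnt_insert_real[OF insert.hyps(2,1)] FF_SucSuc[of ?q c c] by (simp add: algebra_simps)
    also have "\<dots> = ?q ^ Suc c * (FF ?q (card J) (Suc c) * FF ?q n (Suc c)) +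
        (?q ^ n - ?q ^ c) * ?q ^ c * (?q ^ Suc c - 1) * (FF ?q (card J) c * FF ?q n c)"
      using insert.IH[of c] insert.IH[of "Suc c"] by simp
    also have "\<dots> = FF ?q (Suc (card J)) (Suc c) * FF ?q n (Suc c)"
      unfolding FF_pascal FF_Suc[of ?q n c] by (simp add: algebra_simps)
    finally show ?thesis using Suc insert.hyps by simp
  qed
qed



definition hcnt :: "'a::{finite,field} itself \<Rightarrow> nat \<Rightarrow> nat set \<Rightarrow> nat set \<Rightarrow> nat \<Rightarrow> nat" where
  "hcnt _ n B T r = card {C \<in> PiE (B \<union> T) (\<lambda>_. vecs n :: (nat \<Rightarrow> 'a) set).
      card (fv.span (C ` (B \<union> T))) = CARD('a) ^ card T * card (fv.span (C ` B)) \<and>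
      card (fv.span (C ` (B \<union> T))) = CARD('a) ^ r}"

lemma hcnt_empty: "hcnt TYPE('a::{finite,field}) n B {} r = cnt TYPE('a) n B r"
  unfolding hcnt_def cnt_def by simp

lemma card_y2:
  fixes S :: "(nat \<Rightarrow> 'a::{finite,field}) set"
  assumes "S \<subseteq> vecs n" "finite S" "card (fv.span S) \<le> CARD('a) ^ t * cB" "1 \<le> cB"
  shows "card {y \<in> vecs n. card (fv.span (insert y S)) = CARD('a) ^ Suc t * cB \<and>
                             card (fv.span (insert y S)) = CARD('a) ^ r} =
         (if r \<noteq> 0 \<and> card (fv.span S) = CARD('a) ^ t * cB \<and> card (fv.span S) = CARD('a) ^ (r - 1)
          then CARD('a) ^ n - CARD('a) ^ (r - 1) else 0)"
proof -
  let ?q = "CARD('a)"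
  have q1: "1 < ?q" using card_field_ge2[where 'a='a] by simp
  obtain c where c: "card (fv.span S) = ?q ^ c" using span_card_pow[OF assms(2)] by blast
  have sub: "fv.span S \<subseteq> vecs n" by (rule span_vecs[OF assms(1)])
  have lt: "?q ^ t * cB < ?q ^ Suc t * cB" using q1 assms(4) by simp
  have key: "(card (fv.span (insert y S)) = ?q ^ Suc t * cB \<and> card (fv.span (insert y S)) = ?q ^ r)
     \<longleftrightarrow> y \<notin> fv.span S \<and> card (fv.span S) = ?q ^ t * cB \<and> Suc c = r" for y
  proof (cases "y \<in> fv.span S")
    case True
    have e: "card (fv.span (insert y S)) = card (fv.span S)" using True by (simp add: card_span_insert)
    have "card (fv.span S) \<noteq> ?q ^ Suc t * cB" using lt assms(3) by linarith
    thus ?thesis using e True by simp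
  next
    case False
    then show ?thesis using c power_inject_exp[OF q1, of "Suc c" r] q1
      by (auto simp: card_span_insert)
  qed
  have set: "{y \<in> vecs n. card (fv.span (insert y S)) = ?q ^ Suc t * cB \<and> card (fv.span (insert y S)) = ?q ^ r}
     = (if card (fv.span S) = ?q ^ t * cB \<and> Suc c = r then vecs n - fv.span S else {})"
    using key sub by auto
  have fs: "finite (fv.span S)" using finite_subset[OF sub finite_vecs] .
  have cd: "card (vecs n - fv.span S) = ?q ^ n - ?q ^ c"
    using card_Diff_subset[OF fs sub] card_vecs[where 'a='a] c by simp
  show ?thesis unfolding set using cd c power_inject_exp[OF q1, of c "r - 1"]
    by (cases r) auto
qed

lemma hcnt_insert:
  assumes "a \<notin> T" "a \<notin> B" "finite T" "finite B"
  shows "hcnt TYPE('a::{finite,field}) n B (insert a T) r =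
     (if r = 0 then 0 else (CARD('a) ^ n - CARD('a) ^ (r - 1)) * hcnt TYPE('a) n B T (r - 1))"
proof -
  let ?q = "CARD('a)"
  let ?V = "vecs n :: (nat \<Rightarrow> 'a) set"
  have BT: "B \<union> insert a T = insert a (B \<union> T)" by auto
  have aBT: "a \<notin> B \<union> T" using assms by auto
  have img: "(g(a := y)) ` insert a (B \<union> T) = insert y (g ` (B \<union> T))" for g :: "nat \<Rightarrow> nat \<Rightarrow> 'a" and y
    using aBT by auto
  have imgB: "(g(a := y)) ` B = g ` B" for g :: "nat \<Rightarrow> nat \<Rightarrow> 'a" and y
    using assms(2) by auto
  have sub: "g ` (B \<union> T) \<subseteq> ?V" if "g \<in> PiE (B \<union> T) (\<lambda>_. ?V)" for g
    using that by (auto simp: PiE_mem)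
  have ct: "card (insert a T) = Suc (card T)" using assms by simp
  have "hcnt TYPE('a) n B (insert a T) r = (\<Sum>g\<in>PiE (B \<union> T) (\<lambda>_. ?V).
     card {y\<in>?V. card (fv.span ((g(a:=y)) ` insert a (B \<union> T))) = ?q ^ card (insert a T) * card (fv.span ((g(a:=y)) ` B)) \<and>
         card (fv.span ((g(a:=y)) ` insert a (B \<union> T))) = ?q ^ r})"
    unfolding hcnt_def BT by (rule card_filter_PiE_insert[OF aBT _ finite_vecs]) (use assms in auto)
  also have "\<dots> = (\<Sum>g\<in>PiE (B \<union> T) (\<lambda>_. ?V).
     (if r \<noteq> 0 \<and> card (fv.span (g ` (B \<union> T))) = ?q ^ card T * card (fv.span (g ` B)) \<and>
        card (fv.span (g ` (B \<union> T))) = ?q ^ (r - 1) then ?q ^ n - ?q ^ (r - 1) else 0))"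
    unfolding img imgB ct
  proof (rule sum.cong[OF refl])
    fix g assume g: "g \<in> PiE (B \<union> T) (\<lambda>_. ?V)"
    show "card {y \<in> ?V. card (fv.span (insert y (g ` (B \<union> T)))) = ?q ^ Suc (card T) * card (fv.span (g ` B)) \<and>
            card (fv.span (insert y (g ` (B \<union> T)))) = ?q ^ r} =
          (if r \<noteq> 0 \<and> card (fv.span (g ` (B \<union> T))) = ?q ^ card T * card (fv.span (g ` B)) \<and>
            card (fv.span (g ` (B \<union> T))) = ?q ^ (r - 1) then ?q ^ n - ?q ^ (r - 1) else 0)"
      by (rule card_y2[OF sub[OF g] finite_imageI span_card_le_img[OF assms(3)] span_card_pos[OF finite_imageI[OF assms(4)]]])
        (use assms in auto)
  qed
  also have "\<dots> = (if r = 0 then 0 else (?q ^ n - ?q ^ (r - 1)) * hcnt TYPE('a) n B T (r - 1))"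
    unfolding hcnt_def using assms
    by (cases "r = 0") (simp_all add: sum_if_const finite_PiE finite_vecs mult.commute)
  finally show ?thesis .
qed



lemma hcnt_le_vecs:
  assumes "hcnt TYPE('a::{finite,field}) n B T c \<noteq> 0"
  shows "CARD('a) ^ c \<le> CARD('a) ^ n"
proof -
  obtain g where g: "g \<in> PiE (B \<union> T) (\<lambda>_. vecs n :: (nat \<Rightarrow> 'a) set)" "card (fv.span (g ` (B \<union> T))) = CARD('a) ^ c"
  proof -
    have "{C \<in> PiE (B \<union> T) (\<lambda>_. vecs n :: (nat \<Rightarrow> 'a) set).
      card (fv.span (C ` (B \<union> T))) = CARD('a) ^ card T * card (fv.span (C ` B)) \<and>
      card (fv.span (C ` (B \<union> T))) = CARD('a) ^ c} \<noteq> {}"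
      using assms unfolding hcnt_def by (intro notI) simp
    thus ?thesis using that by blast
  qed
  have "g ` (B \<union> T) \<subseteq> vecs n" using g(1) by (auto simp: PiE_mem)
  hence "fv.span (g ` (B \<union> T)) \<subseteq> vecs n" by (rule span_vecs)
  hence "card (fv.span (g ` (B \<union> T))) \<le> card (vecs n :: (nat \<Rightarrow> 'a) set)" by (rule card_mono[OF finite_vecs])
  thus ?thesis using g(2) card_vecs[where 'a='a] by simp
qed

lemma hcnt_closed:
  assumes "finite T" "finite B" "B \<inter> T = {}"
  shows "real (hcnt TYPE('a::{finite,field}) n B T r) =
    (if card T \<le> r then real (cnt TYPE('a) n B (r - card T)) *
        (\<Prod>l\<in>{r - card T..<r}. real CARD('a) ^ n - real CARD('a) ^ l) else 0)"
  using assms(1,3)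
proof (induction T arbitrary: r rule: finite_induct)
  case empty
  then show ?case by (simp add: hcnt_empty)
next
  case (insert a T)
  let ?q = "real CARD('a)"
  have aB: "a \<notin> B" using insert.prems by auto
  have BT: "B \<inter> T = {}" using insert.prems by auto
  have ct: "card (insert a T) = Suc (card T)" using insert.hyps by simp
  note hi = hcnt_insert[OF insert.hyps(2) aB insert.hyps(1) assms(2), where 'a='a and n=n]
  show ?case
  proof (cases r)
    case 0
    then show ?thesis using hi ct by simp
  next
    case (Suc c)
    have "real (hcnt TYPE('a) n B (insert a T) (Suc c)) = (?q ^ n - ?q ^ c) * real (hcnt TYPE('a) n B T c)"
    proof (cases "hcnt TYPE('a) n B T c = 0")
      case True
      then show ?thesis using hi by simp
    next
      case False
      hence "CARD('a) ^ c \<le> CARD('a) ^ n" by (rule hcnt_le_vecs)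
      then show ?thesis using hi by (simp add: of_nat_diff)
    qed
    also have "\<dots> = (if card (insert a T) \<le> Suc c then real (cnt TYPE('a) n B (Suc c - card (insert a T))) *
        (\<Prod>l\<in>{Suc c - card (insert a T)..<Suc c}. ?q ^ n - ?q ^ l) else 0)"
    proof (cases "card T \<le> c")
      case True
      have "(\<Prod>l\<in>{c - card T..<Suc c}. ?q ^ n - ?q ^ l) = (\<Prod>l\<in>{c - card T..<c}. ?q ^ n - ?q ^ l) * (?q ^ n - ?q ^ c)"
        by (rule prod.atLeastLessThan_Suc) simp
      then show ?thesis using True insert.IH[OF BT, of c] ct by simp
    next
      case False
      then show ?thesis using insert.IH[OF BT, of c] ct by simp
    qed
    finally show ?thesis using Suc by simp
  qed
qed

lemma FF_zero: "m < d \<Longrightarrow> FF q m d = 0"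
  unfolding FF_def by (rule prod_zero) (auto intro!: bexI[where x=m])

lemma FF_diag_nz: "1 < q \<Longrightarrow> FF q d d \<noteq> 0"
  unfolding FF_def by (auto simp: prod_zero_iff power_strict_increasing_iff)

lemma gauss_binom_FF:
  assumes "1 < q"
  shows "gauss_binom q (int m) (int d) = FF q m d / FF q d d"
proof (cases "d \<le> m")
  case True
  then show ?thesis unfolding gauss_binom_def FF_def by (simp add: prod_dividef)
next
  case False
  then show ?thesis unfolding gauss_binom_def by (simp add: FF_zero)
qed

definition gcnt :: "'a::{finite,field} itself \<Rightarrow> nat \<Rightarrow> nat set \<Rightarrow> nat set \<Rightarrow> nat \<Rightarrow> nat" where
  "gcnt _ n K T r = card {C \<in> PiE K (\<lambda>_. vecs n :: (nat \<Rightarrow> 'a) set).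
      (\<forall>i\<in>T. C i \<notin> fv.span (C ` (K - {i}))) \<and> card (fv.span (C ` K)) = CARD('a) ^ r}"

lemma gcnt_closed:
  assumes "finite K" "T \<subseteq> K"
  shows "real (gcnt TYPE('a::{finite,field}) n K T r) =
    gauss_binom (real CARD('a)) (int (card K) - int (card T)) (int r - int (card T)) * FF (real CARD('a)) n r"
proof -
  let ?q = "real CARD('a)"
  let ?B = "K - T"
  have q1: "1 < ?q" using card_field_ge2[where 'a='a] by simp
  have BT: "?B \<union> T = K" using assms by auto
  have fT: "finite T" using assms finite_subset by blast
  have fB: "finite ?B" using assms by simp
  have dj: "?B \<inter> T = {}" by auto
  have cB: "card ?B = card K - card T" using assms by (simp add: card_Diff_subset fT)
  have tk: "card T \<le> card K" using assms by (simp add: card_mono)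
  have "gcnt TYPE('a) n K T r = hcnt TYPE('a) n ?B T r"
    unfolding gcnt_def hcnt_def BT
    using indep_iff_card[OF fT fB dj] BT by (intro arg_cong[where f=card] Collect_cong) auto
  hence "real (gcnt TYPE('a) n K T r) = (if card T \<le> r then real (cnt TYPE('a) n ?B (r - card T)) *
        (\<Prod>l\<in>{r - card T..<r}. ?q ^ n - ?q ^ l) else 0)"
    using hcnt_closed[OF fT fB dj, where 'a='a and n=n and r=r] by simp
  also have "\<dots> = gauss_binom ?q (int (card K) - int (card T)) (int r - int (card T)) * FF ?q n r"
  proof (cases "card T \<le> r")
    case True
    have c: "real (cnt TYPE('a) n ?B (r - card T)) =
       FF ?q (card K - card T) (r - card T) * FF ?q n (r - card T) / FF ?q (r - card T) (r - card T)"
      using cnt_closed[OF fB, where 'a='a and n=n and b="r - card T"] FF_diag_nz[OF q1] cB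
      by (simp add: field_simps)
    have p: "FF ?q n (r - card T) * (\<Prod>l\<in>{r - card T..<r}. ?q ^ n - ?q ^ l) = FF ?q n r"
      unfolding FF_def lessThan_atLeast0 by (rule prod.atLeastLessThan_concat) auto
    have g: "gauss_binom ?q (int (card K) - int (card T)) (int r - int (card T)) =
       FF ?q (card K - card T) (r - card T) / FF ?q (r - card T) (r - card T)"
      using gauss_binom_FF[OF q1, of "card K - card T" "r - card T"] True tk by (simp add: of_nat_diff)
    show ?thesis using True unfolding c g p[symmetric] by simp
  next
    case False
    then show ?thesis by (simp add: gauss_binom_def)
  qed
  finally show ?thesis .
qed



interpretation fvp: vector_space_pair "(\<lambda>a (f::nat\<Rightarrow>'a::field) i. a * f i)" "(times :: 'a \<Rightarrow> 'a \<Rightarrow> 'a)"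
  by unfold_locales

definition col :: "(nat \<Rightarrow> nat \<Rightarrow> 'a) \<Rightarrow> nat \<Rightarrow> nat \<Rightarrow> 'a" where
  "col M j = (\<lambda>i. M i j)"

lemma col_vecs: "M \<in> matrices n k \<Longrightarrow> col M j \<in> vecs n"
  unfolding matrices_def vecs_def col_def by auto

lemma col_zero: "M \<in> matrices n k \<Longrightarrow> k \<le> j \<Longrightarrow> col M j = 0"
  unfolding matrices_def col_def by (auto simp: fun_eq_iff)

lemma linear_dot: "Vector_Spaces.linear (\<lambda>a (f::nat\<Rightarrow>'a::field) i. a * f i) times (\<lambda>v. \<Sum>l<n. c l * v l)"
proof -
  have v1: "vector_space (\<lambda>a (f::nat\<Rightarrow>'a::field) i. a * f i)"
    by (rule fv.vector_space_axioms)
  have v2: "vector_space (times :: 'a \<Rightarrow> 'a \<Rightarrow> 'a)"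
    by unfold_locales (auto simp: algebra_simps)
  show ?thesis
    unfolding Vector_Spaces.linear_iff
    apply (intro conjI allI)
       apply (rule v1)
      apply (rule v2)
     apply (simp add: sum.distrib distrib_left)
    apply (simp add: sum_distrib_left mult.left_commute)
    done
qed

lemma vec_expand:
  fixes w :: "nat \<Rightarrow> 'a::field"
  assumes "w \<in> vecs n"
  shows "w = (\<Sum>l<n. (\<lambda>i. w l * unit_vec l i))"
proof (rule ext)
  fix j
  have "(\<Sum>l<n. (\<lambda>i. w l * unit_vec l i)) j = (\<Sum>l<n. w l * unit_vec l j)"
    by (induction n) auto
  also have "\<dots> = (if j < n then w j else 0)"
    by (simp add: unit_vec_def if_distrib sum.delta' cong: if_cong)
  also have "\<dots> = w j" using assms by (auto simp: vecs_def)
  finally show "w j = (\<Sum>l<n. (\<lambda>i. w l * unit_vec l i)) j" by simp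
qed

lemma recoverable_iff:
  fixes M :: "nat \<Rightarrow> nat \<Rightarrow> 'a::field"
  assumes M: "M \<in> matrices n k" and i: "i < k"
  shows "unit_vec i \<in> row_space n k M \<longleftrightarrow> col M i \<notin> fv.span (col M ` ({..<k} - {i}))"
proof
  assume "unit_vec i \<in> row_space n k M"
  then obtain c where c: "unit_vec i = (\<lambda>j. \<Sum>l<n. c l * M l j)" unfolding row_space_def by blast
  let ?\<phi> = "\<lambda>v. \<Sum>l<n. c l * v l"
  have phi: "?\<phi> (col M j) = unit_vec i j" for j
    using fun_cong[OF c, of j] by (simp add: col_def)
  show "col M i \<notin> fv.span (col M ` ({..<k} - {i}))"
  proof
    assume "col M i \<in> fv.span (col M ` ({..<k} - {i}))"
    hence "?\<phi> (col M i) = 0"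
      by (rule fvp.linear_eq_0_on_span[OF linear_dot, rotated]) (auto simp: phi unit_vec_def split: if_splits)
    thus False using phi[of i] by (simp add: unit_vec_def)
  qed
next
  let ?S = "col M ` ({..<k} - {i})"
  let ?v = "col M i"
  assume nv: "?v \<notin> fv.span ?S"
  obtain B0 where B0: "B0 \<subseteq> ?S" "fv.independent B0" "?S \<subseteq> fv.span B0"
    by (rule fv.maximal_independent_subset)
  have nvB: "?v \<notin> fv.span B0" using nv fv.span_mono[OF B0(1)] by blast
  have vB: "?v \<notin> B0" using nvB fv.span_superset by blast
  have ind: "fv.independent (insert ?v B0)" by (rule fv.independent_insertI[OF nvB B0(2)])
  define f where "f = fvp.construct (insert ?v B0) (\<lambda>b. if b = ?v then 1 else 0)"
  have lf: "Vector_Spaces.linear (\<lambda>a (f::nat\<Rightarrow>'a) i. a * f i) times f"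
    unfolding f_def by (rule fvp.linear_construct[OF ind])
  have fv1: "f ?v = 1" unfolding f_def by (subst fvp.construct_basis[OF ind]) auto
  have fB: "f b = 0" if "b \<in> B0" for b
    unfolding f_def using that vB by (subst fvp.construct_basis[OF ind]) auto
  have fS: "f w = 0" if "w \<in> fv.span ?S" for w
  proof -
    have "fv.span ?S \<subseteq> fv.span (fv.span B0)" by (rule fv.span_mono[OF B0(3)])
    hence "w \<in> fv.span B0" using that by (simp add: fv.span_span subset_iff)
    thus ?thesis by (rule fvp.linear_eq_0_on_span[OF lf fB, rotated])
  qed
  define c where "c l = f (unit_vec l)" for l
  have fdot: "f w = (\<Sum>l<n. c l * w l)" if "w \<in> vecs n" for w
  proof -
    have "f w = f (\<Sum>l<n. (\<lambda>i. w l * unit_vec l i))" using vec_expand[OF that] by simp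
    also have "\<dots> = (\<Sum>l<n. f (\<lambda>i. w l * unit_vec l i))" by (rule fvp.linear_sum[OF lf])
    also have "\<dots> = (\<Sum>l<n. c l * w l)"
      using fvp.linear_scale[OF lf] by (simp add: c_def mult.commute)
    finally show ?thesis .
  qed
  have "unit_vec i = (\<lambda>j. \<Sum>l<n. c l * M l j)"
  proof (rule ext)
    fix j
    have "(\<Sum>l<n. c l * M l j) = f (col M j)"
      using fdot[OF col_vecs[OF M, of j]] by (simp add: col_def)
    also have "\<dots> = unit_vec i j"
    proof (cases "j < k")
      case True
      show ?thesis
      proof (cases "j = i")
        case True thus ?thesis using fv1 by (simp add: unit_vec_def)
      next
        case False
        hence "col M j \<in> fv.span ?S" using \<open>j < k\<close> by (intro fv.span_base) auto
        thus ?thesis using fS False by (simp add: unit_vec_def)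
      qed
    next
      case False
      hence "col M j = 0" by (intro col_zero[OF M]) simp
      thus ?thesis using False i fvp.linear_0[OF lf] by (simp add: unit_vec_def)
    qed
    finally show "unit_vec i j = (\<Sum>l<n. c l * M l j)" by simp
  qed
  thus "unit_vec i \<in> row_space n k M" unfolding row_space_def by blast
qed



lemma bij_mat:
  "bij_betw (\<lambda>M. restrict (col M) {..<k}) (matrices n k :: (nat \<Rightarrow> nat \<Rightarrow> 'a::field) set)
      (PiE {..<k} (\<lambda>_. vecs n))"
proof (rule bij_betw_byWitness[where f'="\<lambda>C i j. if j < k then C j i else 0"])
  show "\<forall>M\<in>(matrices n k :: (nat \<Rightarrow> nat \<Rightarrow> 'a) set). (\<lambda>i j. if j < k then restrict (col M) {..<k} j i else 0) = M"
  proof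
    fix M :: "nat \<Rightarrow> nat \<Rightarrow> 'a" assume M: "M \<in> matrices n k"
    show "(\<lambda>i j. if j < k then restrict (col M) {..<k} j i else 0) = M"
    proof (intro ext)
      fix i j show "(if j < k then restrict (col M) {..<k} j i else 0) = M i j"
        using M by (simp add: col_def matrices_def)
    qed
  qed
  show "\<forall>C\<in>PiE {..<k} (\<lambda>_. vecs n :: (nat \<Rightarrow> 'a) set). restrict (col (\<lambda>i j. if j < k then C j i else 0)) {..<k} = C"
  proof
    fix C :: "nat \<Rightarrow> nat \<Rightarrow> 'a" assume C: "C \<in> PiE {..<k} (\<lambda>_. vecs n)"
    show "restrict (col (\<lambda>i j. if j < k then C j i else 0)) {..<k} = C"
    proof (rule ext)
      fix j show "restrict (col (\<lambda>i j. if j < k then C j i else 0)) {..<k} j = C j"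
        using PiE_arb[OF C, of j] by (cases "j < k") (simp_all add: col_def)
    qed
  qed
  show "(\<lambda>M. restrict (col M) {..<k}) ` (matrices n k :: (nat \<Rightarrow> nat \<Rightarrow> 'a) set) \<subseteq> PiE {..<k} (\<lambda>_. vecs n)"
  proof (rule image_subsetI)
    fix M :: "nat \<Rightarrow> nat \<Rightarrow> 'a" assume M: "M \<in> matrices n k"
    show "restrict (col M) {..<k} \<in> PiE {..<k} (\<lambda>_. vecs n)"
      by (rule restrict_PiE_iff[THEN iffD2]) (simp add: col_vecs[OF M])
  qed
  show "(\<lambda>C i j. if j < k then C j i else 0) ` PiE {..<k} (\<lambda>_. vecs n) \<subseteq> (matrices n k :: (nat \<Rightarrow> nat \<Rightarrow> 'a) set)"
  proof (rule image_subsetI)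
    fix C :: "nat \<Rightarrow> nat \<Rightarrow> 'a" assume C: "C \<in> PiE {..<k} (\<lambda>_. vecs n)"
    have "C j \<in> vecs n" if "j < k" for j by (rule PiE_mem[OF C]) (simp add: that)
    thus "(\<lambda>i j. if j < k then C j i else 0) \<in> matrices n k"
      by (simp add: matrices_def vecs_def)
  qed
qed

lemma card_matrices: "card (matrices n k :: (nat \<Rightarrow> nat \<Rightarrow> 'a::{finite,field}) set) = CARD('a) ^ (n * k)"
proof -
  have "card (matrices n k :: (nat \<Rightarrow> nat \<Rightarrow> 'a) set) = card (PiE {..<k} (\<lambda>_. vecs n :: (nat \<Rightarrow> 'a) set))"
    by (rule bij_betw_same_card[OF bij_mat])
  also have "\<dots> = (CARD('a) ^ n) ^ k" by (simp add: card_PiE card_vecs)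
  finally show ?thesis by (simp add: power_mult)
qed

lemma finite_matrices: "finite (matrices n k :: (nat \<Rightarrow> nat \<Rightarrow> 'a::{finite,field}) set)"
proof -
  have "finite (PiE {..<k} (\<lambda>_. vecs n :: (nat \<Rightarrow> 'a) set))" by (rule finite_PiE) (simp_all add: finite_vecs)
  moreover have "finite (matrices n k :: (nat \<Rightarrow> nat \<Rightarrow> 'a) set) = finite (PiE {..<k} (\<lambda>_. vecs n :: (nat \<Rightarrow> 'a) set))"
    by (rule bij_betw_finite[OF bij_mat])
  ultimately show ?thesis by simp
qed

definition Xc :: "nat \<Rightarrow> (nat \<Rightarrow> nat \<Rightarrow> 'a::field) \<Rightarrow> nat set" where
  "Xc k C = {i \<in> {..<k}. C i \<notin> fv.span (C ` ({..<k} - {i}))}"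

lemma recoverable_Xc:
  fixes M :: "nat \<Rightarrow> nat \<Rightarrow> 'a::field"
  assumes M: "M \<in> matrices n k"
  shows "recoverable n k M = Xc k (restrict (col M) {..<k})"
proof -
  have im: "restrict (col M) {..<k} ` ({..<k} - {i}) = col M ` ({..<k} - {i})" for i
    by (auto simp: image_def)
  show ?thesis unfolding recoverable_def Xc_def
    using recoverable_iff[OF M] im by auto
qed

lemma count_reduce:
  "card {M \<in> (matrices n k :: (nat \<Rightarrow> nat \<Rightarrow> 'a::{finite,field}) set). x \<le> card (recoverable n k M)} =
   card {C \<in> PiE {..<k} (\<lambda>_. vecs n :: (nat \<Rightarrow> 'a) set). x \<le> card (Xc k C)}"
proof -
  let ?f = "\<lambda>M :: nat \<Rightarrow> nat \<Rightarrow> 'a. restrict (col M) {..<k}"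
  have b: "bij_betw ?f (matrices n k) (PiE {..<k} (\<lambda>_. vecs n))" by (rule bij_mat)
  have "bij_betw ?f {M \<in> matrices n k. x \<le> card (Xc k (?f M))} {C \<in> PiE {..<k} (\<lambda>_. vecs n). x \<le> card (Xc k C)}"
    using bij_betw_subset[OF b] b unfolding bij_betw_def by (auto simp: image_iff) 
  hence "card {M \<in> matrices n k. x \<le> card (Xc k (?f M))} = card {C \<in> PiE {..<k} (\<lambda>_. vecs n :: (nat \<Rightarrow> 'a) set). x \<le> card (Xc k C)}"
    by (rule bij_betw_same_card)
  moreover have "{M \<in> matrices n k. x \<le> card (recoverable n k M)} = {M \<in> matrices n k. x \<le> card (Xc k (?f M))}"
    by (auto simp: recoverable_Xc)
  ultimately show ?thesis by simp
qed



lemma sum_pow_card: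
  fixes \<phi> :: "nat \<Rightarrow> real"
  assumes "finite A"
  shows "(\<Sum>U\<in>Pow A. \<phi> (card U)) = (\<Sum>j\<le>card A. real (card A choose j) * \<phi> j)"
proof -
  have "(\<Sum>U\<in>Pow A. \<phi> (card U)) = (\<Sum>j\<le>card A. \<Sum>U\<in>{U. U \<in> Pow A \<and> card U = j}. \<phi> (card U))"
    by (rule sum.group[symmetric]) (use assms in \<open>auto intro: card_mono\<close>)
  also have "\<dots> = (\<Sum>j\<le>card A. real (card A choose j) * \<phi> j)"
  proof (rule sum.cong[OF refl])
    fix j
    have e: "{U. U \<in> Pow A \<and> card U = j} = {B. B \<subseteq> A \<and> card B = j}" by auto
    have "(\<Sum>U\<in>{U. U \<in> Pow A \<and> card U = j}. \<phi> (card U)) = (\<Sum>U\<in>{U. U \<in> Pow A \<and> card U = j}. \<phi> j)"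
      by (rule sum.cong) auto
    also have "\<dots> = real (card A choose j) * \<phi> j"
      unfolding e by (simp add: n_subsets[OF assms])
    finally show "(\<Sum>U\<in>{U. U \<in> Pow A \<and> card U = j}. \<phi> (card U)) = real (card A choose j) * \<phi> j" .
  qed
  finally show ?thesis .
qed

lemma sum_supersets:
  fixes \<phi> :: "nat \<Rightarrow> real"
  assumes "finite K" "S \<subseteq> K"
  shows "(\<Sum>T\<in>{T. S \<subseteq> T \<and> T \<subseteq> K}. \<phi> (card T)) =
         (\<Sum>j\<le>card K - card S. real ((card K - card S) choose j) * \<phi> (card S + j))"
proof -
  have fS: "finite S" using assms finite_subset by blast
  have img: "{T. S \<subseteq> T \<and> T \<subseteq> K} = (\<lambda>U. S \<union> U) ` Pow (K - S)"
  proof (rule set_eqI)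
    fix T show "T \<in> {T. S \<subseteq> T \<and> T \<subseteq> K} \<longleftrightarrow> T \<in> (\<lambda>U. S \<union> U) ` Pow (K - S)"
    proof
      assume "T \<in> {T. S \<subseteq> T \<and> T \<subseteq> K}"
      thus "T \<in> (\<lambda>U. S \<union> U) ` Pow (K - S)" by (intro image_eqI[where x="T - S"]) auto
    next
      assume "T \<in> (\<lambda>U. S \<union> U) ` Pow (K - S)"
      thus "T \<in> {T. S \<subseteq> T \<and> T \<subseteq> K}" using assms by auto
    qed
  qed
  have inj: "inj_on (\<lambda>U. S \<union> U) (Pow (K - S))"
    by (rule inj_onI) blast
  have "(\<Sum>T\<in>{T. S \<subseteq> T \<and> T \<subseteq> K}. \<phi> (card T)) = (\<Sum>U\<in>Pow (K - S). \<phi> (card (S \<union> U)))"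
    unfolding img by (simp add: sum.reindex[OF inj])
  also have "\<dots> = (\<Sum>U\<in>Pow (K - S). \<phi> (card S + card U))"
  proof (rule sum.cong[OF refl])
    fix U assume "U \<in> Pow (K - S)"
    hence U: "U \<subseteq> K - S" by simp
    have "finite U" by (rule finite_subset[OF U]) (use assms(1) in simp)
    moreover have "S \<inter> U = {}" using U by auto
    ultimately
    show "\<phi> (card (S \<union> U)) = \<phi> (card S + card U)" using fS by (simp add: card_Un_disjoint)
  qed
  also have "\<dots> = (\<Sum>j\<le>card (K - S). real (card (K - S) choose j) * \<phi> (card S + j))"
    by (rule sum_pow_card[of "K - S" "\<lambda>j. \<phi> (card S + j)"]) (use assms in simp)
  also have "card (K - S) = card K - card S" using assms fS by (simp add: card_Diff_subset)
  finally show ?thesis .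
qed

lemma alt_supersets:
  assumes "finite Y" "S \<subseteq> Y"
  shows "(\<Sum>T\<in>{T. S \<subseteq> T \<and> T \<subseteq> Y}. (-1::real) ^ (card T - card S)) = (if S = Y then 1 else 0)"
proof -
  have "(\<Sum>T\<in>{T. S \<subseteq> T \<and> T \<subseteq> Y}. (-1::real) ^ (card T - card S)) =
     (\<Sum>j\<le>card Y - card S. real ((card Y - card S) choose j) * (-1) ^ (card S + j - card S))"
    by (rule sum_supersets[OF assms, of "\<lambda>t. (-1) ^ (t - card S)"])
  also have "\<dots> = (\<Sum>j\<le>card Y - card S. (-1) ^ j * real ((card Y - card S) choose j))"
    by (rule sum.cong[OF refl]) (simp add: mult.commute)
  also have "\<dots> = (if S = Y then 1 else 0)"
  proof (cases "card Y - card S = 0")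
    case True
    have "card S = card Y" using card_mono[OF assms] True by linarith
    hence "S = Y" by (rule card_subset_eq[OF assms(1,2)])
    thus ?thesis using True by simp
  next
    case False
    hence ne: "S \<noteq> Y" by auto
    have "(\<Sum>j\<le>card Y - card S. (-1) ^ j * real ((card Y - card S) choose j)) = (0::real)"
      by (rule choose_alternating_sum) (use False in simp)
    thus ?thesis using ne by simp
  qed
  finally show ?thesis .
qed

lemma indicator_identity:
  assumes "finite K" "Y \<subseteq> K"
  shows "(\<Sum>i\<in>{x..card K}. \<Sum>S\<in>{S. S \<subseteq> K \<and> card S = i}. \<Sum>T\<in>{T. S \<subseteq> T \<and> T \<subseteq> K}.
           (-1::real) ^ (card T - card S) * (if T \<subseteq> Y then 1 else 0)) = (if x \<le> card Y then 1 else 0)"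
proof -
  have fY: "finite Y" using assms finite_subset by blast
  have inner: "(\<Sum>T\<in>{T. S \<subseteq> T \<and> T \<subseteq> K}. (-1::real) ^ (card T - card S) * (if T \<subseteq> Y then 1 else 0))
      = (if S = Y then 1 else 0)" if S: "S \<subseteq> K" for S
  proof -
    have fin: "finite {T. S \<subseteq> T \<and> T \<subseteq> K}" by (rule finite_subset[of _ "Pow K"]) (use assms(1) in auto)
    have "(\<Sum>T\<in>{T. S \<subseteq> T \<and> T \<subseteq> K}. (-1::real) ^ (card T - card S) * (if T \<subseteq> Y then 1 else 0))
        = (\<Sum>T\<in>{T \<in> {T. S \<subseteq> T \<and> T \<subseteq> K}. T \<subseteq> Y}. (-1::real) ^ (card T - card S))"
    proof -
      have "(\<Sum>T\<in>{T. S \<subseteq> T \<and> T \<subseteq> K}. (-1::real) ^ (card T - card S) * (if T \<subseteq> Y then 1 else 0))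
          = (\<Sum>T\<in>{T. S \<subseteq> T \<and> T \<subseteq> K}. if T \<subseteq> Y then (-1::real) ^ (card T - card S) else 0)"
        by (rule sum.cong[OF refl]) simp
      also have "\<dots> = (\<Sum>T\<in>{T \<in> {T. S \<subseteq> T \<and> T \<subseteq> K}. T \<subseteq> Y}. (-1::real) ^ (card T - card S))"
        by (rule sum.inter_filter[OF fin, symmetric])
      finally show ?thesis .
    qed
    also have "{T \<in> {T. S \<subseteq> T \<and> T \<subseteq> K}. T \<subseteq> Y} = (if S \<subseteq> Y then {T. S \<subseteq> T \<and> T \<subseteq> Y} else {})"
    proof (cases "S \<subseteq> Y")
      case True thus ?thesis using assms(2) by auto
    next
      case False thus ?thesis by auto
    qed
    also have "(\<Sum>T\<in>(if S \<subseteq> Y then {T. S \<subseteq> T \<and> T \<subseteq> Y} else {}). (-1::real) ^ (card T - card S)) = (if S = Y then 1 else 0)"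
    proof (cases "S \<subseteq> Y")
      case True thus ?thesis using alt_supersets[OF fY True] by simp
    next
      case False
      hence "S \<noteq> Y" by auto
      thus ?thesis using False by simp
    qed
    finally show ?thesis .
  qed
  have finS: "finite {S. S \<subseteq> K \<and> card S = i}" for i by (rule finite_subset[of _ "Pow K"]) (use assms(1) in auto)
  have mid: "(\<Sum>S\<in>{S. S \<subseteq> K \<and> card S = i}. \<Sum>T\<in>{T. S \<subseteq> T \<and> T \<subseteq> K}.
           (-1::real) ^ (card T - card S) * (if T \<subseteq> Y then 1 else 0)) = (if card Y = i then 1 else 0)" for i
  proof -
    have "(\<Sum>S\<in>{S. S \<subseteq> K \<and> card S = i}. \<Sum>T\<in>{T. S \<subseteq> T \<and> T \<subseteq> K}.
           (-1::real) ^ (card T - card S) * (if T \<subseteq> Y then 1 else 0)) =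
          (\<Sum>S\<in>{S. S \<subseteq> K \<and> card S = i}. if S = Y then 1 else 0)"
      by (rule sum.cong[OF refl]) (rule inner, simp)
    also have "\<dots> = (if card Y = i then 1 else 0)" using assms(2) finS[of i] by simp
    finally show ?thesis .
  qed
  have cY: "card Y \<le> card K" using card_mono[OF assms] .
  have "(\<Sum>i\<in>{x..card K}. \<Sum>S\<in>{S. S \<subseteq> K \<and> card S = i}. \<Sum>T\<in>{T. S \<subseteq> T \<and> T \<subseteq> K}.
           (-1::real) ^ (card T - card S) * (if T \<subseteq> Y then 1 else 0)) = (\<Sum>i\<in>{x..card K}. if card Y = i then 1 else 0)"
    by (rule sum.cong[OF refl]) (rule mid)
  also have "\<dots> = (if x \<le> card Y then 1 else 0)" using cY by simp
  finally show ?thesis .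
qed

lemma rank_unique:
  fixes C :: "nat \<Rightarrow> nat \<Rightarrow> 'a::{finite,field}"
  assumes "finite K"
  shows "(\<Sum>r\<le>card K. if card (fv.span (C ` K)) = CARD('a) ^ r then 1 else 0) = (1::real)"
proof -
  have q1: "1 < CARD('a)" using card_field_ge2[where 'a='a] by simp
  obtain r0 where r0: "r0 \<le> card (C ` K)" "card (fv.span (C ` K)) = CARD('a) ^ r0"
    using span_card_pow[OF finite_imageI[OF assms]] by blast
  have "r0 \<le> card K" using r0(1) card_image_le[OF assms, of C] by linarith
  moreover have "(\<Sum>r\<le>card K. if card (fv.span (C ` K)) = CARD('a) ^ r then 1 else 0) =
      (\<Sum>r\<le>card K. if r0 = r then 1 else (0::real))"
    using r0(2) power_inject_exp[OF q1] by (intro sum.cong) auto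
  ultimately show ?thesis by simp
qed



lemma card_filter_real: "finite A \<Longrightarrow> real (card {x\<in>A. P x}) = (\<Sum>x\<in>A. if P x then 1 else 0)"
  by (simp add: sum.inter_filter[symmetric])

lemma count_T:
  fixes k n :: nat and T :: "nat set"
  assumes T: "T \<subseteq> {..<k}"
  shows "(\<Sum>C\<in>PiE {..<k} (\<lambda>_. vecs n :: (nat \<Rightarrow> 'a::{finite,field}) set). if T \<subseteq> Xc k C then 1 else 0) =
    (\<Sum>r\<le>k. gauss_binom (real CARD('a)) (int k - int (card T)) (int r - int (card T)) * FF (real CARD('a)) n r)"
proof -
  let ?P = "PiE {..<k} (\<lambda>_. vecs n :: (nat \<Rightarrow> 'a) set)"
  let ?K = "{..<k::nat}"
  have finP: "finite ?P" by (rule finite_PiE) (simp_all add: finite_vecs)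
  have eqT: "T \<subseteq> Xc k C \<longleftrightarrow> (\<forall>i\<in>T. C i \<notin> fv.span (C ` (?K - {i})))" for C :: "nat \<Rightarrow> nat \<Rightarrow> 'a"
    using T unfolding Xc_def by auto
  have "(\<Sum>C\<in>?P. if T \<subseteq> Xc k C then 1 else 0) =
        (\<Sum>C\<in>?P. \<Sum>r\<le>k. if (\<forall>i\<in>T. C i \<notin> fv.span (C ` (?K - {i}))) \<and> card (fv.span (C ` ?K)) = CARD('a) ^ r then 1 else (0::real))"
  proof (rule sum.cong[OF refl])
    fix C :: "nat \<Rightarrow> nat \<Rightarrow> 'a"
    have ru: "(\<Sum>r\<le>card ?K. if card (fv.span (C ` ?K)) = CARD('a) ^ r then 1 else 0) = (1::real)"
      by (rule rank_unique) simp
    show "(if T \<subseteq> Xc k C then 1 else 0) =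
        (\<Sum>r\<le>k. if (\<forall>i\<in>T. C i \<notin> fv.span (C ` (?K - {i}))) \<and> card (fv.span (C ` ?K)) = CARD('a) ^ r then 1 else (0::real))"
    proof (cases "T \<subseteq> Xc k C")
      case True
      hence "\<forall>i\<in>T. C i \<notin> fv.span (C ` (?K - {i}))" using eqT by blast
      thus ?thesis using True ru by simp
    next
      case False
      define Q where "Q = (\<forall>i\<in>T. C i \<notin> fv.span (C ` (?K - {i})))"
      have nQ: "\<not> Q" unfolding Q_def using False eqT by blast
      have "(\<Sum>r\<le>k. if Q \<and> card (fv.span (C ` ?K)) = CARD('a) ^ r then 1 else (0::real)) = 0"
        using nQ by simp
      thus ?thesis unfolding Q_def using False by simp
    qed
  qed
  also have "\<dots> = (\<Sum>r\<le>k. \<Sum>C\<in>?P. if (\<forall>i\<in>T. C i \<notin> fv.span (C ` (?K - {i}))) \<and> card (fv.span (C ` ?K)) = CARD('a) ^ r then 1 else (0::real))"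
    by (rule sum.swap)
  also have "\<dots> = (\<Sum>r\<le>k. real (gcnt TYPE('a) n ?K T r))"
    unfolding gcnt_def by (rule sum.cong[OF refl]) (rule card_filter_real[OF finP, symmetric])
  also have "\<dots> = (\<Sum>r\<le>k. gauss_binom (real CARD('a)) (int k - int (card T)) (int r - int (card T)) * FF (real CARD('a)) n r)"
    by (rule sum.cong[OF refl]) (simp add: gcnt_closed[OF _ T])
  finally show ?thesis .
qed



definition hsum :: "real \<Rightarrow> nat \<Rightarrow> nat \<Rightarrow> nat \<Rightarrow> real" where
  "hsum q n k t = (\<Sum>r\<le>k. gauss_binom q (int k - int t) (int r - int t) * FF q n r)"

lemma main_count:
  fixes n k x :: nat
  assumes "x \<le> k"
  shows "real (card {C \<in> PiE {..<k} (\<lambda>_. vecs n :: (nat \<Rightarrow> 'a::{finite,field}) set). x \<le> card (Xc k C)}) =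
    (\<Sum>i\<in>{x..k}. real (k choose i) * (\<Sum>j\<le>k - i. real ((k - i) choose j) * ((-1) ^ j * hsum (real CARD('a)) n k (i + j))))"
proof -
  let ?P = "PiE {..<k} (\<lambda>_. vecs n :: (nat \<Rightarrow> 'a) set)"
  let ?K = "{..<k::nat}"
  let ?SS = "\<lambda>i. {S. S \<subseteq> ?K \<and> card S = i}"
  let ?TT = "\<lambda>S. {T. S \<subseteq> T \<and> T \<subseteq> ?K}"
  let ?w = "\<lambda>S T. (-1::real) ^ (card T - card S)"
  let ?ind = "\<lambda>T C. if T \<subseteq> Xc k C then 1 else (0::real)"
  let ?h = "hsum (real CARD('a)) n k"
  have finP: "finite ?P" by (rule finite_PiE) (simp_all add: finite_vecs)
  have "real (card {C \<in> ?P. x \<le> card (Xc k C)}) = (\<Sum>C\<in>?P. if x \<le> card (Xc k C) then 1 else 0)"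
    by (rule card_filter_real[OF finP])
  also have "\<dots> = (\<Sum>C\<in>?P. \<Sum>i\<in>{x..k}. \<Sum>S\<in>?SS i. \<Sum>T\<in>?TT S. ?w S T * ?ind T C)"
  proof (rule sum.cong[OF refl])
    fix C :: "nat \<Rightarrow> nat \<Rightarrow> 'a"
    have XK: "Xc k C \<subseteq> ?K" unfolding Xc_def by auto
    show "(if x \<le> card (Xc k C) then 1 else 0) = (\<Sum>i\<in>{x..k}. \<Sum>S\<in>?SS i. \<Sum>T\<in>?TT S. ?w S T * ?ind T C)"
      using indicator_identity[OF finite_lessThan XK, of x] by simp
  qed
  also have "\<dots> = (\<Sum>i\<in>{x..k}. \<Sum>C\<in>?P. \<Sum>S\<in>?SS i. \<Sum>T\<in>?TT S. ?w S T * ?ind T C)"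
    by (rule sum.swap)
  also have "\<dots> = (\<Sum>i\<in>{x..k}. \<Sum>S\<in>?SS i. \<Sum>C\<in>?P. \<Sum>T\<in>?TT S. ?w S T * ?ind T C)"
    by (rule sum.cong[OF refl]) (rule sum.swap)
  also have "\<dots> = (\<Sum>i\<in>{x..k}. \<Sum>S\<in>?SS i. \<Sum>T\<in>?TT S. \<Sum>C\<in>?P. ?w S T * ?ind T C)"
    by (rule sum.cong[OF refl], rule sum.cong[OF refl]) (rule sum.swap)
  also have "\<dots> = (\<Sum>i\<in>{x..k}. \<Sum>S\<in>?SS i. \<Sum>T\<in>?TT S. ?w S T * ?h (card T))"
  proof (rule sum.cong[OF refl], rule sum.cong[OF refl], rule sum.cong[OF refl])
    fix i S T assume "T \<in> ?TT S"
    hence T: "T \<subseteq> ?K" by simp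
    have "(\<Sum>C\<in>?P. ?w S T * ?ind T C) = ?w S T * (\<Sum>C\<in>?P. ?ind T C)" by (rule sum_distrib_left[symmetric])
    also have "(\<Sum>C\<in>?P. ?ind T C) = ?h (card T)" unfolding hsum_def by (rule count_T[OF T])
    finally show "(\<Sum>C\<in>?P. ?w S T * ?ind T C) = ?w S T * ?h (card T)" .
  qed
  also have "\<dots> = (\<Sum>i\<in>{x..k}. \<Sum>S\<in>?SS i. \<Sum>j\<le>k - i. real ((k - i) choose j) * ((-1) ^ j * ?h (i + j)))"
  proof (rule sum.cong[OF refl], rule sum.cong[OF refl])
    fix i S assume "S \<in> ?SS i"
    hence S: "S \<subseteq> ?K" "card S = i" by auto
    have "(\<Sum>T\<in>?TT S. ?w S T * ?h (card T)) =
        (\<Sum>j\<le>card ?K - card S. real ((card ?K - card S) choose j) * ((-1) ^ (card S + j - card S) * ?h (card S + j)))"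
      by (rule sum_supersets[OF finite_lessThan S(1), of "\<lambda>t. (-1) ^ (t - card S) * ?h t"])
    thus "(\<Sum>T\<in>?TT S. ?w S T * ?h (card T)) = (\<Sum>j\<le>k - i. real ((k - i) choose j) * ((-1) ^ j * ?h (i + j)))"
      using S(2) by simp
  qed
  also have "\<dots> = (\<Sum>i\<in>{x..k}. real (k choose i) * (\<Sum>j\<le>k - i. real ((k - i) choose j) * ((-1) ^ j * ?h (i + j))))"
  proof (rule sum.cong[OF refl])
    fix i
    have "card (?SS i) = k choose i" using n_subsets[OF finite_lessThan, of k i] by simp
    thus "(\<Sum>S\<in>?SS i. \<Sum>j\<le>k - i. real ((k - i) choose j) * ((-1) ^ j * ?h (i + j))) =
        real (k choose i) * (\<Sum>j\<le>k - i. real ((k - i) choose j) * ((-1) ^ j * ?h (i + j)))"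
      by simp
  qed
  finally show ?thesis .
qed



lemma reorg:
  fixes q :: real and n k x :: nat
  assumes "x \<le> k"
  shows "(\<Sum>i\<in>{x..k}. real (k choose i) * (\<Sum>j\<le>k - i. real ((k - i) choose j) * ((-1) ^ j * hsum q n k (i + j)))) =
   (\<Sum>r = x..min n k. (\<Sum>i = x..r. real (k choose i) *
        (\<Sum>j = 0..k - i. (-1) ^ j * real ((k - i) choose j) *
           gauss_binom q (int k - int i - int j) (int r - int i - int j))) * (\<Prod>l = 0..<r. q ^ n - q ^ l))"
proof -
  define A where "A i r = real (k choose i) * (\<Sum>j = 0..k - i. (-1) ^ j * real ((k - i) choose j) *
           gauss_binom q (int k - int i - int j) (int r - int i - int j))" for i r
  have g: "gauss_binom q (int k - int (i + j)) (int r - int (i + j)) = gauss_binom q (int k - int i - int j) (int r - int i - int j)"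
    for i j r by (simp add: algebra_simps)
  have stepa: "real (k choose i) * (\<Sum>j\<le>k - i. real ((k - i) choose j) * ((-1) ^ j * hsum q n k (i + j))) =
     (\<Sum>r\<le>k. A i r * FF q n r)" for i
  proof -
    have "real (k choose i) * (\<Sum>j\<le>k - i. real ((k - i) choose j) * ((-1) ^ j * hsum q n k (i + j))) =
       (\<Sum>j\<le>k - i. \<Sum>r\<le>k. real (k choose i) * ((-1) ^ j * real ((k - i) choose j) *
           gauss_binom q (int k - int i - int j) (int r - int i - int j)) * FF q n r)"
      unfolding hsum_def g by (simp add: sum_distrib_left mult_ac)
    also have "\<dots> = (\<Sum>r\<le>k. \<Sum>j\<le>k - i. real (k choose i) * ((-1) ^ j * real ((k - i) choose j) *
           gauss_binom q (int k - int i - int j) (int r - int i - int j)) * FF q n r)"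
      by (rule sum.swap)
    also have "\<dots> = (\<Sum>r\<le>k. A i r * FF q n r)"
      unfolding A_def by (simp add: sum_distrib_left sum_distrib_right mult_ac atLeast0AtMost)
    finally show ?thesis .
  qed
  have Azero: "A i r = 0" if "r < i" for i r
    unfolding A_def gauss_binom_def using that by simp
  have "(\<Sum>i\<in>{x..k}. real (k choose i) * (\<Sum>j\<le>k - i. real ((k - i) choose j) * ((-1) ^ j * hsum q n k (i + j)))) =
     (\<Sum>i\<in>{x..k}. \<Sum>r\<le>k. A i r * FF q n r)"
    by (rule sum.cong[OF refl]) (rule stepa)
  also have "\<dots> = (\<Sum>r\<le>k. \<Sum>i\<in>{x..k}. A i r * FF q n r)"
    by (rule sum.swap)
  also have "\<dots> = (\<Sum>r\<le>k. \<Sum>i\<in>{x..r}. A i r * FF q n r)"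
  proof (rule sum.cong[OF refl])
    fix r assume r: "r \<in> {..k}"
    show "(\<Sum>i\<in>{x..k}. A i r * FF q n r) = (\<Sum>i\<in>{x..r}. A i r * FF q n r)"
      by (rule sum.mono_neutral_right) (use r Azero in auto)
  qed
  also have "\<dots> = (\<Sum>r\<in>{x..min n k}. \<Sum>i\<in>{x..r}. A i r * FF q n r)"
  proof (rule sum.mono_neutral_right)
    show "\<forall>r\<in>{..k} - {x..min n k}. (\<Sum>i\<in>{x..r}. A i r * FF q n r) = 0"
    proof
      fix r assume r: "r \<in> {..k} - {x..min n k}"
      show "(\<Sum>i\<in>{x..r}. A i r * FF q n r) = 0"
      proof (cases "r < x")
        case True thus ?thesis by simp
      next
        case False
        hence "n < r" using r by auto
        thus ?thesis by (simp add: FF_zero)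
      qed
    qed
  qed auto
  also have "\<dots> = (\<Sum>r = x..min n k. (\<Sum>i = x..r. A i r) * (\<Prod>l = 0..<r. q ^ n - q ^ l))"
    by (rule sum.cong[OF refl]) (simp add: sum_distrib_right FF_def atLeast0LessThan)
  finally show ?thesis unfolding A_def .
qed

theorem proposition1:
  fixes n k x :: nat
  assumes "n \<ge> 1" and "k \<ge> 1" and "x \<le> k"
  defines "q \<equiv> CARD('a::{finite,field})"
  shows "measure_pmf.prob (pmf_of_set (matrices n k :: (nat \<Rightarrow> nat \<Rightarrow> 'a) set))
            {M. x \<le> card (recoverable n k M)}
       = (1 / real q ^ (n * k)) *
         (\<Sum>r = x..min n k.
            (\<Sum>i = x..r. real (k choose i) *
               (\<Sum>j = 0..k - i. (-1) ^ j * real ((k - i) choose j) *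
                  gauss_binom (real q) (int k - int i - int j) (int r - int i - int j)))
            * (\<Prod>l = 0..<r. (real q ^ n - real q ^ l)))"
proof -
  let ?M = "matrices n k :: (nat \<Rightarrow> nat \<Rightarrow> 'a) set"
  have fin: "finite ?M" by (rule finite_matrices)
  have ne: "?M \<noteq> {}"
  proof -
    have "(\<lambda>i j. 0) \<in> ?M" unfolding matrices_def by simp
    thus ?thesis by blast
  qed
  have "measure_pmf.prob (pmf_of_set ?M) {M. x \<le> card (recoverable n k M)} =
      real (card (?M \<inter> {M. x \<le> card (recoverable n k M)})) / real (card ?M)"
    by (rule measure_pmf_of_set[OF ne fin])
  also have "?M \<inter> {M. x \<le> card (recoverable n k M)} = {M \<in> ?M. x \<le> card (recoverable n k M)}" by blast
  also have "real (card {M \<in> ?M. x \<le> card (recoverable n k M)}) =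
     (\<Sum>r = x..min n k. (\<Sum>i = x..r. real (k choose i) *
        (\<Sum>j = 0..k - i. (-1) ^ j * real ((k - i) choose j) *
           gauss_binom (real q) (int k - int i - int j) (int r - int i - int j))) * (\<Prod>l = 0..<r. real q ^ n - real q ^ l))"
    unfolding count_reduce main_count[OF assms(3)] q_def by (rule reorg[OF assms(3)])
  also have "real (card ?M) = real q ^ (n * k)" unfolding q_def card_matrices by simp
  finally show ?thesis by simp
qed

end
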